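(* Let $s$ be a sequence of positive integers. The set of peakless $s$-words $\mathrm{Av}_s(132,231,121)$ is contained in every zig-zag language $L\subseteq S_s$.
   Context: For a sequence $s=(s_1,\dots,s_m)$ of positive integers, an $s$-word is a word with exactly $s_i$ copies of $i$ for each $i\in[m]$; $S_s$ is the set of $s$-words. A word $w$ contains a pattern $\alpha=\alpha_1\cdots\alpha_\ell$ (over $[k]$, using all values of $[k]$) if there are indices $i_1<\dots<i_\ell$ with $w_{i_a}<w_{i_b}$ iff $\alpha_a<\alpha_b$ and $w_{i_a}=w_{i_b}$ iff $\alpha_a=\alpha_b$; $\mathrm{Av}_s(132,231,121)$ is the set of $s$-words containing none of $132$, $231$, $121$. Parent operation: $p(s)=(s_1,\dots,s_{m-1},s_m-1)$ if $s_m>1$ and $p(s)=(s_1,\dots,s_{m-1})$ if $s_m=1$; for an $s$-word $w$, $p(w)$ deletes the rightmost copy of $m$; $p(L)=\{p(w):w\in L\}$. Zig-zag language (recursive on $n=\sum s_i$): for the empty sequence the only zig-zag language is $\{\varepsilon\}$. For $n\ge1$, $L\subseteq S_s$ is zig-zag if $p(L)$ is a zig-zag language of $p(s)$-words and for every $w'\in p(L)$ both of the following lie in $L$: (a) $w'm$, and (b) $mw'$ if $s_m=1$, or, if $s_m>1$, the word obtained by inserting $m$ immediately next to the rightmost $m$ of $w'$. *)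

theory Defs
  imports Main
begin

(* A sequence s = (s_1,...,s_m) is a list of naturals; s ! (i-1) = s_i.
   Words are lists of naturals over the alphabet {1..m}. *)

definition is_sword :: "nat list \<Rightarrow> nat list \<Rightarrow> bool" where
  "is_sword s w \<longleftrightarrow> set w \<subseteq> {1..length s} \<and>
     (\<forall>i\<in>{1..length s}. count_list w i = s ! (i - 1))"

definition S_words :: "nat list \<Rightarrow> nat list set" where
  "S_words s = {w. is_sword s w}"

definition contains_pat :: "nat list \<Rightarrow> nat list \<Rightarrow> bool" where
  "contains_pat w alpha \<longleftrightarrow>
     (\<exists>f. strict_mono_on {..<length alpha} f \<and>
          (\<forall>a<length alpha. f a < length w) \<and>
          (\<forall>a<length alpha. \<forall>b<length alpha.
              (w ! f a < w ! f b \<longleftrightarrow> alpha ! a < alpha ! b) \<and>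
              (w ! f a = w ! f b \<longleftrightarrow> alpha ! a = alpha ! b)))"

definition peakless :: "nat list \<Rightarrow> nat list set" where
  "peakless s = {w \<in> S_words s. \<not> contains_pat w [1,3,2] \<and>
                   \<not> contains_pat w [2,3,1] \<and> \<not> contains_pat w [1,2,1]}"

definition parent_seq :: "nat list \<Rightarrow> nat list" where
  "parent_seq s = (if last s > 1 then butlast s @ [last s - 1] else butlast s)"

definition rightmost :: "nat \<Rightarrow> nat list \<Rightarrow> nat" where
  "rightmost x w = Max {i. i < length w \<and> w ! i = x}"

definition parent_word :: "nat \<Rightarrow> nat list \<Rightarrow> nat list" where
  "parent_word m w = take (rightmost m w) w @ drop (Suc (rightmost m w)) w"

definition insert_next :: "nat \<Rightarrow> nat list \<Rightarrow> nat list" where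
  "insert_next m w = take (Suc (rightmost m w)) w @ [m] @ drop (Suc (rightmost m w)) w"

function zigzag :: "nat list \<Rightarrow> nat list set \<Rightarrow> bool" where
  "zigzag s L =
    (if s = [] then L = {[]}
     else if last s = 0 then False
     else (let m = length s; ps = parent_seq s; PL = parent_word m ` L in
       L \<subseteq> S_words s \<and> zigzag ps PL \<and>
       (\<forall>w'\<in>PL. w' @ [m] \<in> L \<and>
          (if last s = 1 then m # w' \<in> L else insert_next m w' \<in> L))))"
  by auto
termination
  apply (relation "measure (\<lambda>(s, L). sum_list s)")
   apply simp
  apply (clarsimp simp: parent_seq_def)
  apply (case_tac s rule: rev_cases)
   apply auto
  done

end

theory Submission
  imports Defs
begin

definition nopeak :: "nat list \<Rightarrow> bool" where
  "nopeak w \<longleftrightarrow> (\<forall>i j k. i < j \<longrightarrow> j < k \<longrightarrow> k < length w \<longrightarrow>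
      \<not> (w ! i < w ! j \<and> w ! k < w ! j))"

lemma peakless_nopeak:
  assumes "w \<in> peakless s" shows "nopeak w"
  unfolding nopeak_def
proof (intro allI impI notI)
  fix i j k assume ij: "i < j" and jk: "j < k" and kl: "k < length w"
    and pk: "w ! i < w ! j \<and> w ! k < w ! j"
  define f where "f = (\<lambda>a::nat. if a = 0 then i else if a = 1 then j else k)"
  have sm: "strict_mono_on {..<Suc (Suc (Suc 0))} f"
    unfolding strict_mono_on_def f_def using ij jk by auto
  have bd: "\<forall>a<Suc (Suc (Suc 0)). f a < length w" unfolding f_def using ij jk kl by auto
  have c3: "\<And>P. (\<forall>a<(3::nat). P a) \<longleftrightarrow> P 0 \<and> P 1 \<and> P 2"
    unfolding numeral_3_eq_3 All_less_Suc by (auto simp: numeral_2_eq_2)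
  consider "w ! i < w ! k" | "w ! k < w ! i" | "w ! i = w ! k" by linarith
  then show False
  proof cases
    case 1
    have "contains_pat w [1,3,2]" unfolding contains_pat_def
      apply (rule exI[of _ f])
      using sm bd 1 pk by (simp add: All_less_Suc f_def)
    then show False using assms by (simp add: peakless_def)
  next
    case 2
    have "contains_pat w [2,3,1]" unfolding contains_pat_def
      apply (rule exI[of _ f])
      using sm bd 2 pk by (simp add: All_less_Suc f_def)
    then show False using assms by (simp add: peakless_def)
  next
    case 3
    have "contains_pat w [1,2,1]" unfolding contains_pat_def
      apply (rule exI[of _ f])
      using sm bd 3 pk by (simp add: All_less_Suc f_def)
    then show False using assms by (simp add: peakless_def)
  qed
qed

lemma nopeak_delete:
  assumes "nopeak w" "r < length w"
  shows "nopeak (take r w @ drop (Suc r) w)"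
proof -
  define v where "v = take r w @ drop (Suc r) w"
  define g where "g = (\<lambda>i::nat. if i < r then i else Suc i)"
  have lv: "length v = length w - 1" using assms(2) by (simp add: v_def)
  have vn: "\<And>i. i < length v \<Longrightarrow> v ! i = w ! g i"
    using assms(2) by (auto simp: v_def g_def nth_append min_def)
  have gm: "\<And>a b. a < b \<Longrightarrow> g a < g b" by (auto simp: g_def)
  have gl: "\<And>i. i < length v \<Longrightarrow> g i < length w" using lv by (auto simp: g_def)
  show ?thesis unfolding v_def[symmetric] nopeak_def
  proof (intro allI impI notI)
    fix i j k assume h: "i < j" "j < k" "k < length v" "v ! i < v ! j \<and> v ! k < v ! j"
    have "i < length v" "j < length v" using h by auto
    then have e: "v ! i = w ! g i" "v ! j = w ! g j" "v ! k = w ! g k" using vn h(3) by auto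
    have "g i < g j" "g j < g k" "g k < length w" using gm gl h by auto
    then show False using assms(1) h(4) e unfolding nopeak_def by auto
  qed
qed

lemma rightmost_props:
  assumes "m \<in> set w"
  shows "rightmost m w < length w" "w ! rightmost m w = m"
    "\<And>i. rightmost m w < i \<Longrightarrow> i < length w \<Longrightarrow> w ! i \<noteq> m"
proof -
  let ?S = "{i. i < length w \<and> w ! i = m}"
  have fin: "finite ?S" by (rule finite_subset[of _ "{..<length w}"]) auto
  have ne: "?S \<noteq> {}" using assms by (auto simp: in_set_conv_nth)
  have "rightmost m w \<in> ?S" unfolding rightmost_def using Max_in[OF fin ne] .
  then show "rightmost m w < length w" "w ! rightmost m w = m" by auto
  fix i assume "rightmost m w < i" "i < length w"
  show "w ! i \<noteq> m"
  proof
    assume "w ! i = m"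
    then have "i \<in> ?S" using \<open>i < length w\<close> by simp
    then have "i \<le> rightmost m w" unfolding rightmost_def using Max_ge[OF fin] by blast
    then show False using \<open>rightmost m w < i\<close> by simp
  qed
qed

lemma pw_decomp:
  assumes "m \<in> set w"
  shows "w = take (rightmost m w) w @ m # drop (Suc (rightmost m w)) w"
  using id_take_nth_drop[OF rightmost_props(1)[OF assms]] rightmost_props(2)[OF assms] by simp

lemma m_notin_drop:
  assumes "m \<in> set w"
  shows "m \<notin> set (drop (Suc (rightmost m w)) w)"
proof
  assume "m \<in> set (drop (Suc (rightmost m w)) w)"
  then obtain i where "i < length (drop (Suc (rightmost m w)) w)" "drop (Suc (rightmost m w)) w ! i = m"
    by (auto simp: in_set_conv_nth)
  moreover have "Suc (rightmost m w) + i < length w" using calculation by simp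
  ultimately show False using rightmost_props(3)[OF assms, of "Suc (rightmost m w) + i"] by simp
qed

lemma pw_count:
  assumes "m \<in> set w"
  shows "count_list w x = count_list (parent_word m w) x + (if x = m then 1 else 0)"
proof -
  have "count_list w x = count_list (take (rightmost m w) w @ m # drop (Suc (rightmost m w)) w) x"
    using pw_decomp[OF assms] by simp
  then show ?thesis by (simp add: parent_word_def)
qed

lemma pw_set: "set (parent_word m w) \<subseteq> set w"
  unfolding parent_word_def
  by (metis append_take_drop_id set_append set_drop_subset_set_drop Un_mono order_refl le_SucI)

lemma valley:
  assumes "nopeak w" "set w \<subseteq> {1..m}" "m \<in> set w" "Suc (rightmost m w) < length w"
  shows "\<forall>i<rightmost m w. w ! i = m"
proof (intro allI impI)
  fix i assume i: "i < rightmost m w"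
  let ?r = "rightmost m w"
  show "w ! i = m"
  proof (rule ccontr)
    assume ne: "w ! i \<noteq> m"
    have "w ! i \<in> set w" using i assms(4) by simp
    then have a: "w ! i < m" using ne assms(2) by auto
    have "w ! Suc ?r \<in> set w" using assms(4) by simp
    moreover have "w ! Suc ?r \<noteq> m" using rightmost_props(3)[OF assms(3)] assms(4) by simp
    ultimately have b: "w ! Suc ?r < m" using assms(2) by auto
    have "w ! ?r = m" using rightmost_props(2)[OF assms(3)] .
    then show False using assms(1) a b i assms(4) unfolding nopeak_def
      by (metis lessI)
  qed
qed

lemma insert_case:
  assumes "m \<in> set w" "0 < rightmost m w" "\<forall>i<rightmost m w. w ! i = m"
  shows "insert_next m (parent_word m w) = w"
proof -
  define r where "r = rightmost m w"
  define pw where "pw = parent_word m w"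
  have rl: "r < length w" using rightmost_props(1)[OF assms(1)] r_def by simp
  have pwd: "pw = take r w @ drop (Suc r) w" by (simp add: pw_def parent_word_def r_def)
  have lpw: "length pw = length w - 1" using rl pwd by simp
  have pwn: "\<And>i. i < length pw \<Longrightarrow> pw ! i = (if i < r then w ! i else w ! Suc i)"
    using rl by (auto simp: pwd nth_append min_def)
  have rr: "rightmost m pw = r - 1"
    unfolding rightmost_def
  proof (rule Max_eqI)
    show "finite {i. i < length pw \<and> pw ! i = m}"
      by (rule finite_subset[of _ "{..<length pw}"]) auto
    show "r - 1 \<in> {i. i < length pw \<and> pw ! i = m}"
      using pwn[of "r - 1"] assms(2,3) rl lpw r_def by auto
    fix y assume "y \<in> {i. i < length pw \<and> pw ! i = m}"
    then have y: "y < length pw" "pw ! y = m" by auto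
    show "y \<le> r - 1"
    proof (rule ccontr)
      assume "\<not> y \<le> r - 1"
      then have "r \<le> y" by simp
      then have "pw ! y = w ! Suc y" using pwn[OF y(1)] by simp
      moreover have "w ! Suc y \<noteq> m"
        using rightmost_props(3)[OF assms(1), of "Suc y"] \<open>r \<le> y\<close> y(1) lpw r_def by auto
      ultimately show False using y(2) by simp
    qed
  qed
  have "insert_next m pw = take r pw @ [m] @ drop r pw"
    unfolding insert_next_def rr using assms(2) r_def by simp
  also have "take r pw = take r w" using rl by (simp add: pwd)
  also have "drop r pw = drop (Suc r) w" using rl by (simp add: pwd)
  finally have "insert_next m pw = take r w @ m # drop (Suc r) w" by simp
  also have "\<dots> = w" using pw_decomp[OF assms(1)] r_def by simp
  finally show ?thesis by (simp add: pw_def)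
qed

lemma pw_sword:
  assumes pos: "\<forall>x\<in>set s. x > 0" and ne: "s \<noteq> []" and sw: "is_sword s w"
  shows "length s \<in> set w" "is_sword (parent_seq s) (parent_word (length s) w)"
proof -
  define m where "m = length s"
  have m1: "m \<ge> 1" using ne m_def by (cases s) auto
  have ls: "last s = s ! (m - 1)" using last_conv_nth[OF ne] m_def by simp
  have lpos: "last s > 0" using pos ne by simp
  have cm: "count_list w m = last s" using sw m1 ls unfolding is_sword_def m_def by auto
  then show mw: "length s \<in> set w" using lpos count_list_0_iff[of w m] m_def by auto
  have sw1: "set w \<subseteq> {1..m}" using sw unfolding is_sword_def m_def by simp
  have sw2: "\<And>i. i \<in> {1..m} \<Longrightarrow> count_list w i = s ! (i - 1)"
    using sw unfolding is_sword_def m_def by simp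
  define pw where "pw = parent_word m w"
  have pc: "\<And>x. count_list w x = count_list pw x + (if x = m then 1 else 0)"
    using pw_count[OF mw[folded m_def]] pw_def by simp
  have ps1: "set pw \<subseteq> {1..m}" using pw_set[of m w] sw1 pw_def by auto
  have lb: "length (butlast s) = m - 1" using m_def by simp
  show "is_sword (parent_seq s) (parent_word (length s) w)"
  proof (cases "last s > 1")
    case True
    have pse: "parent_seq s = butlast s @ [last s - 1]" using True by (simp add: parent_seq_def)
    have lps: "length (parent_seq s) = m" using pse lb m1 by simp
    show ?thesis unfolding m_def[symmetric] pw_def[symmetric] is_sword_def lps
    proof (intro conjI ballI)
      show "set pw \<subseteq> {1..m}" by (rule ps1)
      fix i assume i: "i \<in> {1..m}"
      show "count_list pw i = parent_seq s ! (i - 1)"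
      proof (cases "i = m")
        case True
        then show ?thesis using pc[of m] cm pse lb by (simp add: nth_append)
      next
        case False
        then have "i - 1 < m - 1" using i by auto
        then show ?thesis using pc[of i] sw2[OF i] False pse lb
          by (simp add: nth_append nth_butlast)
      qed
    qed
  next
    case False
    then have l1: "last s = 1" using lpos by simp
    have pse: "parent_seq s = butlast s" using False by (simp add: parent_seq_def)
    have "count_list pw m = 0" using pc[of m] cm l1 by simp
    then have "m \<notin> set pw" by (simp add: count_list_0_iff)
    then have ps2: "set pw \<subseteq> {1..m-1}"
    proof -
      assume nm: "m \<notin> set pw"
      show ?thesis
      proof
        fix x assume x: "x \<in> set pw"
        then have "x \<in> {1..m}" "x \<noteq> m" using ps1 nm by auto
        then show "x \<in> {1..m-1}" by auto
      qed
    qed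
    show ?thesis unfolding m_def[symmetric] pw_def[symmetric] is_sword_def pse lb
    proof (intro conjI ballI)
      show "set pw \<subseteq> {1..m-1}" by (rule ps2)
      fix i assume i: "i \<in> {1..m-1}"
      then have "i - 1 < m - 1" "i \<in> {1..m}" "i \<noteq> m" by auto
      then show "count_list pw i = butlast s ! (i - 1)"
        using pc[of i] sw2 lb by (simp add: nth_butlast)
    qed
  qed
qed

lemma main_lemma:
  "zigzag s L \<Longrightarrow> \<forall>x\<in>set s. x > 0 \<Longrightarrow> w \<in> S_words s \<Longrightarrow> nopeak w \<Longrightarrow> w \<in> L"
proof (induction s L arbitrary: w rule: zigzag.induct)
  case (1 s L)
  show ?case
  proof (cases "s = []")
    case True
    then have "L = {[]}" using 1(2) by simp
    moreover have "w = []" using 1(4) True by (simp add: S_words_def is_sword_def)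
    ultimately show ?thesis by simp
  next
    case False
    then have l0: "last s \<noteq> 0" using 1(3) by auto
    define m where "m = length s"
    define ps where "ps = parent_seq s"
    define PL where "PL = parent_word m ` L"
    have Z: "zigzag ps PL" and cl: "\<forall>w'\<in>PL. w' @ [m] \<in> L \<and>
          (if last s = 1 then m # w' \<in> L else insert_next m w' \<in> L)"
      using 1(2) False l0 zigzag.simps[of s L] unfolding m_def ps_def PL_def
      by (simp_all add: Let_def del: zigzag.simps)
    have posps: "\<forall>x\<in>set ps. x > 0"
    proof
      fix x assume "x \<in> set ps"
      then show "x > 0" using 1(3) l0 unfolding ps_def parent_seq_def
        by (auto split: if_splits dest: in_set_butlastD)
    qed
    have IH: "\<And>v. v \<in> S_words ps \<Longrightarrow> nopeak v \<Longrightarrow> v \<in> PL"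
      using 1(1)[OF False l0 m_def ps_def PL_def Z posps] by blast
    have sw: "is_sword s w" using 1(4) by (simp add: S_words_def)
    have mw: "m \<in> set w" using pw_sword(1)[OF 1(3) False sw] m_def by simp
    have psw: "is_sword ps (parent_word m w)" using pw_sword(2)[OF 1(3) False sw] m_def ps_def by simp
    define r where "r = rightmost m w"
    have rl: "r < length w" using rightmost_props(1)[OF mw] r_def by simp
    have npw: "nopeak (parent_word m w)"
      using nopeak_delete[OF 1(5) rl] by (simp add: parent_word_def r_def)
    have inPL: "parent_word m w \<in> PL" using IH psw npw by (simp add: S_words_def)
    have clw1: "parent_word m w @ [m] \<in> L" using cl inPL by blast
    have clw2: "last s = 1 \<Longrightarrow> m # parent_word m w \<in> L" using cl inPL by auto
    have clw3: "last s \<noteq> 1 \<Longrightarrow> insert_next m (parent_word m w) \<in> L" using cl inPL by auto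
    have m1: "m \<in> {1..length s}" using m_def False by (cases s) auto
    have cm: "count_list w m = last s"
      using sw m1 last_conv_nth[OF False] unfolding is_sword_def m_def by auto
    have dec: "w = take r w @ m # drop (Suc r) w" using pw_decomp[OF mw] r_def by simp
    have pwd: "parent_word m w = take r w @ drop (Suc r) w" by (simp add: parent_word_def r_def)
    have sw1: "set w \<subseteq> {1..m}" using sw unfolding is_sword_def m_def by simp
    show ?thesis
    proof (cases "Suc r < length w")
      case False
      then have "drop (Suc r) w = []" by simp
      then have "w = parent_word m w @ [m]" using dec pwd by simp
      then show ?thesis using clw1 by simp
    next
      case True
      have allm: "\<forall>i<r. w ! i = m" using valley[OF 1(5) sw1 mw] True r_def by simp
      show ?thesis
      proof (cases "r = 0")
        case True
        have "m \<notin> set (drop (Suc 0) w)" using m_notin_drop[OF mw] True r_def by simp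
        moreover have "m \<in> set (parent_word m w)" if "last s \<noteq> 1"
        proof -
          have "last s > 1" using that l0 by simp
          have "count_list (parent_word m w) m = last s - 1"
            using pw_count[OF mw, of m] cm by simp
          then have "count_list (parent_word m w) m \<noteq> 0" using \<open>last s > 1\<close> by simp
          then show ?thesis by (simp add: count_list_0_iff)
        qed
        ultimately have l1: "last s = 1" using pwd True by auto
        have "w = m # parent_word m w" using dec pwd True by simp
        then show ?thesis using clw2 l1 by simp
      next
        case False
        then have "0 < r" by simp
        have "take r w ! 0 = m" using allm \<open>0 < r\<close> by simp
        moreover have "0 < length (take r w)" using \<open>0 < r\<close> rl by simp
        ultimately have "m \<in> set (take r w)" by (metis nth_mem)
        then have "m \<in> set (parent_word m w)" using pwd by simp
        then have "count_list (parent_word m w) m \<noteq> 0" by (simp add: count_list_0_iff)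
        then have "count_list w m \<ge> 2" using pw_count[OF mw, of m] by simp
        then have "last s \<noteq> 1" using cm by simp
        moreover have "insert_next m (parent_word m w) = w"
          using insert_case[OF mw] \<open>0 < r\<close> allm r_def by simp
        ultimately show ?thesis using clw3 by simp
      qed
    qed
  qed
qed

theorem mainTheorem6:
  fixes s :: "nat list" and L :: "nat list set"
  assumes "\<forall>x\<in>set s. x > 0"
    and "L \<subseteq> S_words s"
    and "zigzag s L"
  shows "peakless s \<subseteq> L"
proof
  fix w assume "w \<in> peakless s"
  then have "nopeak w" "w \<in> S_words s"
    by (rule peakless_nopeak, simp add: peakless_def)
  then show "w \<in> L" using main_lemma[OF assms(3) assms(1)] by simp
qed

end
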